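(* Let $\mathcal H$ be a finite-dimensional Hilbert space and $\mathcal T\subset\mathcal S(\mathcal H)$ a set of quantum states. Then $\mathcal T$ does not allow for a proof of contextuality of quantum theory if and only if $\mathcal T$ is commutative (i.e. $\rho\rho'=\rho'\rho$ for all $\rho,\rho'\in\mathcal T$).
   Context: A set of states $\mathcal T$ does not allow for a proof of contextuality of quantum theory if there exist a POVM $\{G_\lambda\}_\lambda$ and states $\{\sigma_\lambda\}_\lambda$ on $\mathcal H$ (finite index set) such that $\mathrm{tr}[\rho M_k]=\sum_\lambda \mathrm{tr}[\rho G_\lambda]\mathrm{tr}[\sigma_\lambda M_k]$ for all $\rho\in\mathcal T$, all POVMs $\{M_k\}_k$ on $\mathcal H$ and all $k$; equivalently, $\rho=\sum_\lambda\mathrm{tr}[\rho G_\lambda]\sigma_\lambda$ for all $\rho\in\mathcal T$, i.e. $\mathcal T$ consists of fixed points of an entanglement breaking (measure-and-prepare) channel. *)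

theory Defs
  imports "HOL-Analysis.Analysis"
begin

text \<open>Operators on the finite-dimensional Hilbert space H = C^'n are
complex matrices indexed by a finite type 'n (dim H = CARD('n)).\<close>

definition cinner_vec :: "complex^'n \<Rightarrow> complex^'n \<Rightarrow> complex" where
  "cinner_vec v w = (\<Sum>i\<in>UNIV. cnj (v $ i) * w $ i)"

definition psd :: "complex^'n^'n \<Rightarrow> bool" where
  "psd A \<longleftrightarrow> (\<forall>v. Im (cinner_vec v (A *v v)) = 0 \<and> Re (cinner_vec v (A *v v)) \<ge> 0)"

definition is_state :: "complex^'n^'n \<Rightarrow> bool" where
  "is_state \<rho> \<longleftrightarrow> psd \<rho> \<and> trace \<rho> = 1"

text \<open>A POVM with finite index set K (indices taken from nat, which is
no loss of generality for finite index sets).\<close>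
definition is_povm :: "nat set \<Rightarrow> (nat \<Rightarrow> complex^'n^'n) \<Rightarrow> bool" where
  "is_povm K M \<longleftrightarrow> finite K \<and> (\<forall>k\<in>K. psd (M k)) \<and> (\<Sum>k\<in>K. M k) = mat 1"

definition no_contextuality_proof :: "(complex^'n^'n) set \<Rightarrow> bool" where
  "no_contextuality_proof T \<longleftrightarrow>
     (\<exists>(\<Lambda>::nat set) G \<sigma>. is_povm \<Lambda> G \<and> (\<forall>l\<in>\<Lambda>. is_state (\<sigma> l)) \<and>
        (\<forall>\<rho>\<in>T. \<forall>(K::nat set) M. is_povm K M \<longrightarrow>
           (\<forall>k\<in>K. trace (\<rho> ** M k) =
                   (\<Sum>l\<in>\<Lambda>. trace (\<rho> ** G l) * trace (\<sigma> l ** M k)))))"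

end

theory Submission
  imports Defs
begin


definition adj :: "complex^'n^'n \<Rightarrow> complex^'n^'n" where
  "adj A = (\<chi> i j. cnj (A $ j $ i))"

definition smat :: "complex \<Rightarrow> complex^'n^'n \<Rightarrow> complex^'n^'n" where
  "smat c A = (\<chi> i j. c * A $ i $ j)"

definition outer :: "complex^'n \<Rightarrow> complex^'n \<Rightarrow> complex^'n^'n" where
  "outer v w = (\<chi> i j. v $ i * cnj (w $ j))"

lemma cinner_add_left: "cinner_vec (x + y) z = cinner_vec x z + cinner_vec y z"
  by (simp add: cinner_vec_def sum.distrib distrib_right)
lemma cinner_add_right: "cinner_vec x (y + z) = cinner_vec x y + cinner_vec x z"
  by (simp add: cinner_vec_def sum.distrib distrib_left)
lemma cinner_diff_left: "cinner_vec (x - y) z = cinner_vec x z - cinner_vec y z"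
  by (simp add: cinner_vec_def sum_subtractf left_diff_distrib)
lemma cinner_diff_right: "cinner_vec x (y - z) = cinner_vec x y - cinner_vec x z"
  by (simp add: cinner_vec_def sum_subtractf right_diff_distrib)
lemma cinner_scale_left: "cinner_vec (c *s x) z = cnj c * cinner_vec x z"
  by (simp add: cinner_vec_def sum_distrib_left mult.assoc)
lemma cinner_scale_right: "cinner_vec x (c *s z) = c * cinner_vec x z"
  by (simp add: cinner_vec_def sum_distrib_left mult_ac)
lemma cinner_zero_left[simp]: "cinner_vec 0 z = 0"
  by (simp add: cinner_vec_def)
lemma cinner_zero_right[simp]: "cinner_vec x 0 = 0"
  by (simp add: cinner_vec_def)
lemma cinner_cnj: "cnj (cinner_vec x y) = cinner_vec y x"
  by (simp add: cinner_vec_def mult.commute)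
lemma cinner_sum_right: "cinner_vec x (\<Sum>i\<in>I. f i) = (\<Sum>i\<in>I. cinner_vec x (f i))"
  by (induction I rule: infinite_finite_induct) (auto simp: cinner_add_right)
lemma cinner_sum_left: "cinner_vec (\<Sum>i\<in>I. f i) x = (\<Sum>i\<in>I. cinner_vec (f i) x)"
  by (induction I rule: infinite_finite_induct) (auto simp: cinner_add_left)

lemma cinner_adj: "cinner_vec x (A *v y) = cinner_vec (adj A *v x) y"
proof -
  have "cinner_vec x (A *v y) = (\<Sum>i\<in>UNIV. \<Sum>j\<in>UNIV. cnj (x$i) * A$i$j * y$j)"
    by (simp add: cinner_vec_def matrix_vector_mult_def sum_distrib_left mult.assoc)
  also have "\<dots> = (\<Sum>j\<in>UNIV. \<Sum>i\<in>UNIV. cnj (x$i) * A$i$j * y$j)" by (rule sum.swap)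
  also have "\<dots> = cinner_vec (adj A *v x) y"
    by (simp add: cinner_vec_def adj_def matrix_vector_mult_def sum_distrib_left cnj_sum mult_ac)
  finally show ?thesis .
qed

lemma cnj_mult_self: "cnj z * z = complex_of_real ((cmod z)^2)"
  using cmod_power2[of z] by (simp add: complex_eq_iff power2_eq_square)

lemma cinner_self: "cinner_vec x x = of_real ((norm x)^2)"
proof -
  have "cinner_vec x x = (\<Sum>i\<in>UNIV. of_real ((cmod (x$i))^2))"
    unfolding cinner_vec_def by (simp only: cnj_mult_self)
  also have "\<dots> = of_real ((norm x)^2)"
    by (simp add: norm_vec_def L2_set_def sum_nonneg)
  finally show ?thesis .
qed

lemma cinner_self_eq0: "cinner_vec x x = 0 \<longleftrightarrow> x = 0"
  by (simp add: cinner_self)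

lemma scaleR_vec_conv: "(r::real) *\<^sub>R (x::complex^'n) = complex_of_real r *s x"
  unfolding vec_eq_iff by (simp add: of_real_def)

lemma vec_subspace_imp_subspace: "vec.subspace (W::(complex^'n) set) \<Longrightarrow> subspace W"
  unfolding vec.subspace_def subspace_def by (simp add: scaleR_vec_conv)

lemma norm_scale: "norm (c *s (x::complex^'n)) = cmod c * norm x"
proof -
  have "(norm (c *s x))^2 = (cmod c * norm x)^2"
  proof -
    have "complex_of_real ((norm (c *s x))^2) = cinner_vec (c *s x) (c *s x)" by (simp add: cinner_self)
    also have "\<dots> = cnj c * c * cinner_vec x x" by (simp add: cinner_scale_left cinner_scale_right)
    also have "\<dots> = complex_of_real ((cmod c)^2) * complex_of_real ((norm x)^2)"
      by (simp only: cnj_mult_self cinner_self)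
    also have "\<dots> = complex_of_real ((cmod c * norm x)^2)"
      by (simp only: of_real_mult[symmetric] power_mult_distrib)
    finally show ?thesis by (simp only: of_real_eq_iff)
  qed
  thus ?thesis by (simp add: power2_eq_iff_nonneg)
qed

lemma cauchy_schwarz: fixes v x :: "complex^'n" shows "cmod (cinner_vec v x) \<le> norm v * norm x"
proof (cases "cinner_vec v x = 0")
  case True thus ?thesis by simp
next
  case False
  let ?c = "cinner_vec v x"
  define d where "d = cnj ?c / cmod ?c"
  have cd: "cmod d = 1" using False by (simp add: d_def norm_divide)
  have "cinner_vec v (d *s x) = cnj ?c * ?c / of_real (cmod ?c)"
    by (simp add: cinner_scale_right d_def)
  also have "\<dots> = of_real ((cmod ?c)^2) / of_real (cmod ?c)" by (simp only: cnj_mult_self)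
  also have "\<dots> = of_real (cmod ?c)" using False by (simp add: power2_eq_square)
  finally have "cinner_vec v (d *s x) = of_real (cmod ?c)" .
  hence "cmod ?c = Re (cinner_vec v (d *s x))" by simp
  also have "Re (cinner_vec v y) = inner v y" for y :: "complex^'n"
    by (simp add: cinner_vec_def inner_vec_def Re_sum inner_complex_def)
  also have "inner v (d *s x) \<le> norm v * norm (d *s x)" by (rule norm_cauchy_schwarz)
  also have "norm (d *s x) = norm x" by (simp add: norm_scale cd)
  finally show ?thesis .
qed


lemma mv_scale: "A *v (c *s x) = c *s (A *v (x::complex^'n))"
  by (simp add: matrix_vector_mult_def vec_eq_iff sum_distrib_left mult_ac)

lemma cinner_axis: "cinner_vec (axis i 1) (A *v axis j 1) = A $ i $ j"
  by (simp add: cinner_vec_def matrix_vector_mult_def axis_def if_distrib if_distribR cong: if_cong)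

lemma q_expand:
  "cinner_vec (x + c *s y) (A *v (x + c *s y)) =
     cinner_vec x (A *v x) + cnj c * c * cinner_vec y (A *v y)
     + c * cinner_vec x (A *v y) + cnj c * cinner_vec y (A *v x)"
  by (simp add: matrix_vector_right_distrib mv_scale cinner_add_left cinner_add_right
      cinner_scale_left cinner_scale_right algebra_simps)

lemma polar_entries:
  fixes A :: "complex^'n^'n"
  shows "cinner_vec (axis i 1 + axis j 1) (A *v (axis i 1 + axis j 1))
           = A$i$i + A$j$j + A$i$j + A$j$i"
    and "cinner_vec (axis i 1 + \<i> *s axis j 1) (A *v (axis i 1 + \<i> *s axis j 1))
           = A$i$i + A$j$j + \<i> * A$i$j - \<i> * A$j$i"
proof -
  have "cinner_vec (axis i 1 + 1 *s axis j 1) (A *v (axis i 1 + 1 *s axis j 1))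
     = A$i$i + cnj 1 * 1 * A$j$j + 1 * A$i$j + cnj 1 * A$j$i"
    by (simp only: q_expand cinner_axis)
  thus "cinner_vec (axis i 1 + axis j 1) (A *v (axis i 1 + axis j 1))
           = A$i$i + A$j$j + A$i$j + A$j$i" by simp
  have "cinner_vec (axis i 1 + \<i> *s axis j 1) (A *v (axis i 1 + \<i> *s axis j 1))
     = A$i$i + cnj \<i> * \<i> * A$j$j + \<i> * A$i$j + cnj \<i> * A$j$i"
    by (simp only: q_expand cinner_axis)
  thus "cinner_vec (axis i 1 + \<i> *s axis j 1) (A *v (axis i 1 + \<i> *s axis j 1))
           = A$i$i + A$j$j + \<i> * A$i$j - \<i> * A$j$i" by simp
qed

lemma psd_herm:
  assumes "psd (A::complex^'n^'n)"
  shows "adj A = A"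
proof -
  have Im0: "Im (cinner_vec v (A *v v)) = 0" for v using assms by (simp add: psd_def)
  have h: "cnj (A $ j $ i) = A $ i $ j" for i j
  proof -
    have a: "Im (A$i$i) = 0" "Im (A$j$j) = 0" using Im0[of "axis i 1"] Im0[of "axis j 1"]
      by (simp_all add: cinner_axis)
    have "Im (A$i$i + A$j$j + A$i$j + A$j$i) = 0"
      using Im0[of "axis i 1 + axis j 1"] unfolding polar_entries(1) .
    hence b: "Im (A$i$j) + Im (A$j$i) = 0" using a by simp
    have "Im (A$i$i + A$j$j + \<i> * A$i$j - \<i> * A$j$i) = 0"
      using Im0[of "axis i 1 + \<i> *s axis j 1"] unfolding polar_entries(2) .
    hence c: "Re (A$i$j) - Re (A$j$i) = 0" using a by simp
    show ?thesis using b c by (simp add: complex_eq_iff)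
  qed
  show ?thesis by (simp add: adj_def vec_eq_iff h)
qed

lemma form_zero:
  assumes "\<And>v. cinner_vec v ((A::complex^'n^'n) *v v) = 0"
  shows "A = 0"
proof -
  have "A $ i $ j = 0" for i j
  proof -
    have a: "A$i$i = 0" "A$j$j = 0" using assms[of "axis i 1"] assms[of "axis j 1"]
      by (simp_all add: cinner_axis)
    have "A$i$i + A$j$j + A$i$j + A$j$i = 0"
      using assms[of "axis i 1 + axis j 1"] unfolding polar_entries(1) .
    hence b: "A$i$j + A$j$i = 0" using a by simp
    have "A$i$i + A$j$j + \<i> * A$i$j - \<i> * A$j$i = 0"
      using assms[of "axis i 1 + \<i> *s axis j 1"] unfolding polar_entries(2) .
    hence "\<i> * (A$i$j - A$j$i) = 0" using a by (simp add: right_diff_distrib)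
    hence c: "A$i$j - A$j$i = 0" by simp
    show ?thesis using b c by (simp add: complex_eq_iff)
  qed
  thus ?thesis by (simp add: vec_eq_iff)
qed


subsection \<open>Matrix algebra\<close>

lemma mmult_add_rdistrib: "((A::complex^'n^'n) + B) ** C = A ** C + B ** C"
  by (simp add: matrix_matrix_mult_def vec_eq_iff distrib_right sum.distrib)

lemma mmult_diff_rdistrib: "((A::complex^'n^'n) - B) ** C = A ** C - B ** C"
  by (simp add: matrix_matrix_mult_def vec_eq_iff left_diff_distrib sum_subtractf)

lemma mmult_diff_ldistrib: "(C::complex^'n^'n) ** (A - B) = C ** A - C ** B"
  by (simp add: matrix_matrix_mult_def vec_eq_iff right_diff_distrib sum_subtractf)

lemma sum_mmult_left: "(\<Sum>i\<in>I. (f i::complex^'n^'n)) ** (B::complex^'n^'n) = (\<Sum>i\<in>I. f i ** B)"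
  by (induction I rule: infinite_finite_induct) (auto simp: mmult_add_rdistrib)

lemma sum_mmult_right: "(B::complex^'n^'n) ** (\<Sum>i\<in>I. f i) = (\<Sum>i\<in>I. B ** f i)"
  by (induction I rule: infinite_finite_induct) (auto simp: matrix_add_ldistrib)

lemma sum_mv: "(\<Sum>i\<in>I. f i) *v (x::complex^'n) = (\<Sum>i\<in>I. f i *v x)"
  by (induction I rule: infinite_finite_induct) (auto simp: matrix_vector_mult_add_rdistrib)

lemma smat_mv: "smat c A *v x = c *s (A *v x)"
  by (simp add: smat_def matrix_vector_mult_def vec_eq_iff sum_distrib_left mult_ac)

lemma smat_mult_left: "smat c A ** B = smat c (A ** B)"
  by (simp add: smat_def matrix_matrix_mult_def vec_eq_iff sum_distrib_left mult_ac)

lemma smat_mult_right: "A ** smat c B = smat c (A ** B)"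
  by (simp add: smat_def matrix_matrix_mult_def vec_eq_iff sum_distrib_left mult_ac)

lemma smat_add: "smat c (A + B) = smat c A + smat c B"
  by (simp add: smat_def vec_eq_iff distrib_left)

lemma smat_add2: "smat (c + d) A = smat c A + smat d A"
  by (simp add: smat_def vec_eq_iff distrib_right)

lemma smat_diff2: "smat (c - d) A = smat c A - smat d A"
  by (simp add: smat_def vec_eq_iff left_diff_distrib)

lemma smat_smat: "smat c (smat d A) = smat (c * d) A"
  by (simp add: smat_def vec_eq_iff)

lemma smat_sum: "smat c (\<Sum>i\<in>I. f i) = (\<Sum>i\<in>I. smat c (f i))"
  by (induction I rule: infinite_finite_induct) (auto simp: smat_add smat_def vec_eq_iff distrib_left)

lemma smat_sum2: "smat (\<Sum>i\<in>I. f i) A = (\<Sum>i\<in>I. smat (f i) A)"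
  by (induction I rule: infinite_finite_induct) (auto simp: smat_add2 smat_def vec_eq_iff distrib_right)

lemma smat_zero[simp]: "smat 0 A = 0" "smat c 0 = 0"
  by (simp_all add: smat_def vec_eq_iff)

lemma smat_one[simp]: "smat 1 A = A"
  by (simp add: smat_def vec_eq_iff)

lemma trace_smat: "trace (smat c A) = c * trace A"
  by (simp add: smat_def trace_def sum_distrib_left)

lemma trace_sum: "trace (\<Sum>i\<in>I. f i) = (\<Sum>i\<in>I. trace (f i :: complex^'n^'n))"
  by (induction I rule: infinite_finite_induct) (auto simp: trace_add trace_0[simplified])

lemma outer_mv: "outer v w *v x = cinner_vec w x *s v"
  by (simp add: outer_def matrix_vector_mult_def cinner_vec_def vec_eq_iff sum_distrib_left mult_ac)

lemma trace_outer_mult: "trace (outer v w ** M) = cinner_vec w (M *v v)"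
proof -
  have "trace (outer v w ** M) = (\<Sum>i\<in>UNIV. \<Sum>k\<in>UNIV. v$i * cnj (w$k) * M$k$i)"
    by (simp add: trace_def outer_def matrix_matrix_mult_def)
  also have "\<dots> = (\<Sum>k\<in>UNIV. \<Sum>i\<in>UNIV. v$i * cnj (w$k) * M$k$i)" by (rule sum.swap)
  also have "\<dots> = cinner_vec w (M *v v)"
    by (simp add: cinner_vec_def matrix_vector_mult_def sum_distrib_left mult_ac)
  finally show ?thesis .
qed

lemma trace_mult_outer: "trace (M ** outer v w) = cinner_vec w (M *v v)"
  by (subst trace_mul_sym) (rule trace_outer_mult)

lemma mult_outer: "M ** outer v w = outer (M *v v) w"
  by (simp add: outer_def matrix_matrix_mult_def matrix_vector_mult_def vec_eq_iff sum_distrib_right sum_distrib_left mult_ac)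

lemma outer_scale: "outer (c *s v) w = smat c (outer v w)"
  by (simp add: outer_def smat_def vec_eq_iff mult_ac)

lemma trace_outer: "trace (outer v w) = cinner_vec w v"
  by (simp add: trace_def outer_def cinner_vec_def mult.commute)

subsection \<open>Positive semidefinite matrices\<close>

lemma psdD: "psd A \<Longrightarrow> cinner_vec v (A *v v) = complex_of_real (Re (cinner_vec v (A *v v)))"
  "psd A \<Longrightarrow> Re (cinner_vec v (A *v v)) \<ge> 0"
  by (simp_all add: psd_def complex_eq_iff)

lemma psd_zero[simp]: "psd 0"
  by (simp add: psd_def)

lemma psd_add: "psd A \<Longrightarrow> psd B \<Longrightarrow> psd (A + B)"
  by (simp add: psd_def matrix_vector_mult_add_rdistrib cinner_add_right)

lemma psd_smat: "r \<ge> 0 \<Longrightarrow> psd A \<Longrightarrow> psd (smat (complex_of_real r) A)"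
  by (simp add: psd_def smat_mv cinner_scale_right)

lemma psd_sum: "(\<And>i. i \<in> I \<Longrightarrow> psd (f i)) \<Longrightarrow> psd (\<Sum>i\<in>I. f i)"
  by (induction I rule: infinite_finite_induct) (auto intro: psd_add)

lemma cinner_outer: "cinner_vec x (outer v v *v x) = complex_of_real ((cmod (cinner_vec v x))^2)"
proof -
  have "cinner_vec x (outer v v *v x) = cinner_vec v x * cinner_vec x v"
    by (simp add: outer_mv cinner_scale_right)
  also have "\<dots> = cnj (cinner_vec v x) * cinner_vec v x"
    by (simp add: cinner_cnj[of v x, symmetric] mult.commute)
  also have "\<dots> = complex_of_real ((cmod (cinner_vec v x))^2)" by (rule cnj_mult_self)
  finally show ?thesis .
qed

lemma psd_outer: "psd (outer v v)"
  by (simp add: psd_def cinner_outer)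

lemma psd_id_minus_outer:
  assumes "norm v \<le> 1"
  shows "psd (mat 1 - outer v v)"
proof -
  have "cinner_vec x ((mat 1 - outer v v) *v x) = complex_of_real ((norm x)^2 - (cmod (cinner_vec v x))^2)" for x
    by (simp only: matrix_vector_mult_diff_rdistrib cinner_diff_right cinner_outer cinner_self
       matrix_vector_mul_lid of_real_diff)
  moreover have "(cmod (cinner_vec v x))^2 \<le> (norm x)^2" for x
  proof -
    have "cmod (cinner_vec v x) \<le> norm v * norm x" by (rule cauchy_schwarz)
    also have "\<dots> \<le> norm x" using assms by (simp add: mult_left_le_one_le)
    finally show ?thesis by (simp add: power_mono)
  qed
  ultimately show ?thesis by (simp add: psd_def)
qed

lemma is_state_outer: "norm v = 1 \<Longrightarrow> is_state (outer v v)"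
  by (simp add: is_state_def psd_outer trace_outer cinner_self)



definition sadj :: "complex^'n^'n \<Rightarrow> bool" where
  "sadj B \<longleftrightarrow> (\<forall>x y. cinner_vec x (B *v y) = cinner_vec (B *v x) y)"

lemma adj_sadj: "adj A = A \<Longrightarrow> sadj A"
  unfolding sadj_def by (metis cinner_adj)

lemma real_form: "sadj B \<Longrightarrow> cinner_vec v (B *v v) = complex_of_real (Re (cinner_vec v (B *v v)))"
  unfolding sadj_def by (metis cinner_cnj complex_eq_iff complex_cnj_cnj Reals_cnj_iff complex_is_Real_iff of_real_Re)

lemma kernel_lemma:
  assumes sa: "sadj B" and W: "vec.subspace W" and inv: "\<forall>x\<in>W. B *v x \<in> W"
    and nn: "\<forall>u\<in>W. 0 \<le> Re (cinner_vec u (B *v u))"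
    and v: "v \<in> W" and z: "Re (cinner_vec v (B *v v)) = 0"
  shows "B *v v = 0"
proof -
  define w where "w = B *v v"
  have wW: "w \<in> W" using inv v by (simp add: w_def)
  define \<beta> where "\<beta> = Re (cinner_vec w (B *v w))"
  define N where "N = Re (cinner_vec w w)"
  have b0: "\<beta> \<ge> 0" using nn wW by (simp add: \<beta>_def)
  have N0: "N \<ge> 0" by (simp add: N_def cinner_self)
  have key: "0 \<le> t^2 * \<beta> + 2 * t * N" for t :: real
  proof -
    have uW: "v + complex_of_real t *s w \<in> W"
      using W v wW unfolding vec.subspace_def by blast
    have e1: "cinner_vec v (B *v w) = cinner_vec w w"
      using sa unfolding sadj_def w_def by metis
    have e2: "cinner_vec w (B *v v) = cinner_vec w w" by (simp add: w_def)
    have "0 \<le> Re (cinner_vec (v + complex_of_real t *s w) (B *v (v + complex_of_real t *s w)))"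
      using nn uW by blast
    also have "\<dots> = t^2 * \<beta> + 2 * t * N"
      unfolding q_expand e1 e2 using z by (simp add: \<beta>_def N_def power2_eq_square)
    finally show ?thesis .
  qed
  have "N = 0"
  proof (rule ccontr)
    assume "N \<noteq> 0"
    hence Np: "N > 0" using N0 by simp
    define d where "d = \<beta> + 1"
    have dp: "d > 0" using b0 by (simp add: d_def)
    define t where "t = - N / d"
    have "t^2 * \<beta> + 2 * t * N = (N / d) * N * (\<beta> / d - 2)"
      using dp unfolding t_def by (simp add: field_simps power2_eq_square)
    also have "\<dots> < 0"
    proof (rule mult_pos_neg)
      show "0 < N / d * N" using Np dp by simp
      have "\<beta> / d < 1" using dp by (simp add: d_def)
      thus "\<beta> / d - 2 < 0" by simp
    qed
    finally show False using key[of t] by simp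
  qed
  hence "cinner_vec w w = 0" by (simp add: N_def cinner_self)
  thus ?thesis by (simp add: cinner_self_eq0 w_def)
qed

lemma q_scale: "cinner_vec (c *s v) (A *v (c *s v)) = complex_of_real ((cmod c)^2) * cinner_vec v (A *v v)"
proof -
  have "cinner_vec (c *s v) (A *v (c *s v)) = (cnj c * c) * cinner_vec v (A *v v)"
    by (simp add: mv_scale cinner_scale_left cinner_scale_right)
  thus ?thesis by (simp only: cnj_mult_self)
qed

lemma rayleigh:
  fixes A :: "complex^'n^'n"
  assumes sa: "sadj A" and W: "vec.subspace W" and inv: "\<forall>x\<in>W. A *v x \<in> W"
    and ne: "\<exists>x\<in>W. x \<noteq> 0"
  shows "\<exists>v\<in>W. v \<noteq> 0 \<and> (\<exists>lam. A *v v = lam *s v)"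
proof -
  define f where "f v = Re (cinner_vec v (A *v v))" for v
  define K where "K = W \<inter> sphere 0 1"
  have cW: "closed W" using W by (simp add: closed_subspace vec_subspace_imp_subspace)
  have cK: "compact K" unfolding K_def using cW by (simp add: closed_Int_compact)
  obtain x where xW: "x \<in> W" and x0: "x \<noteq> 0" using ne by blast
  have "complex_of_real (1 / norm x) *s x \<in> K"
    using xW x0 W unfolding K_def vec.subspace_def by (simp add: norm_scale norm_divide)
  hence Kne: "K \<noteq> {}" by blast
  have cf: "continuous_on K f"
    unfolding f_def cinner_vec_def matrix_vector_mult_def
    by (intro continuous_intros)
  obtain v0 where v0K: "v0 \<in> K" and vmax: "\<forall>y\<in>K. f y \<le> f v0"
    using continuous_attains_sup[OF cK Kne cf] by blast
  define lam where "lam = f v0"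
  define B where "B = smat (complex_of_real lam) (mat 1) - A"
  have Bv: "B *v x = complex_of_real lam *s x - A *v x" for x
    by (simp add: B_def matrix_vector_mult_diff_rdistrib smat_mv)
  have saB: "sadj B"
    using sa unfolding sadj_def Bv by (simp add: cinner_diff_left cinner_diff_right cinner_scale_left cinner_scale_right)
  have v0W: "v0 \<in> W" and nv0: "norm v0 = 1" using v0K by (auto simp: K_def)
  have fle: "f u \<le> lam * (norm u)^2" if uW: "u \<in> W" for u
  proof (cases "u = 0")
    case True thus ?thesis by (simp add: f_def)
  next
    case False
    let ?u = "complex_of_real (1 / norm u) *s u"
    have "?u \<in> K" using uW False W unfolding K_def vec.subspace_def by (simp add: norm_scale norm_divide)
    hence h1: "f ?u \<le> lam" using vmax by (simp add: lam_def)
    have "f ?u = f u / (norm u)^2"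
      unfolding f_def q_scale by (simp add: power_divide norm_divide)
    hence h2: "f u = (norm u)^2 * f ?u" using False by simp
    show ?thesis unfolding h2 using h1 by (simp add: mult.commute[of lam] mult_left_mono)
  qed
  have nn: "\<forall>u\<in>W. 0 \<le> Re (cinner_vec u (B *v u))"
  proof
    fix u assume "u \<in> W"
    hence "f u \<le> lam * (norm u)^2" by (rule fle)
    moreover have "Re (cinner_vec u (B *v u)) = lam * (norm u)^2 - f u"
      unfolding Bv cinner_diff_right cinner_scale_right cinner_self f_def by simp
    ultimately show "0 \<le> Re (cinner_vec u (B *v u))" by simp
  qed
  have invB: "\<forall>x\<in>W. B *v x \<in> W"
  proof
    fix x assume xW: "x \<in> W"
    have "complex_of_real lam *s x - A *v x \<in> W"
      using W xW inv by (intro vec.subspace_diff vec.subspace_scale) auto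
    thus "B *v x \<in> W" by (simp only: Bv)
  qed
  have z: "Re (cinner_vec v0 (B *v v0)) = 0"
    unfolding Bv cinner_diff_right cinner_scale_right cinner_self nv0 by (simp add: f_def lam_def)
  have "B *v v0 = 0" by (rule kernel_lemma[OF saB W invB nn v0W z])
  hence "A *v v0 = complex_of_real lam *s v0" by (simp add: Bv)
  moreover have "v0 \<noteq> 0" using nv0 by auto
  ultimately show ?thesis using v0W by blast
qed



lemma common_eigvec:
  fixes F :: "(complex^'n^'n) set"
  assumes sa: "\<forall>A\<in>F. sadj A" and comm: "\<forall>A\<in>F. \<forall>B\<in>F. A ** B = B ** A"
    and W: "vec.subspace W" and invW: "\<forall>A\<in>F. \<forall>x\<in>W. A *v x \<in> W" and ne: "\<exists>x\<in>W. x \<noteq> 0"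
  shows "\<exists>v\<in>W. v \<noteq> 0 \<and> (\<forall>A\<in>F. \<exists>l. A *v v = l *s v)"
proof -
  define P where "P W' \<longleftrightarrow> vec.subspace W' \<and> W' \<subseteq> W \<and> (\<forall>A\<in>F. \<forall>x\<in>W'. A *v x \<in> W') \<and> (\<exists>x\<in>W'. x \<noteq> 0)"
    for W' :: "(complex^'n) set"
  have "P W" using W invW ne by (simp add: P_def)
  then obtain W0 where PW0: "P W0" and mn: "\<And>W'. P W' \<Longrightarrow> vec.dim W0 \<le> vec.dim W'"
    using ex_has_least_nat[of P W vec.dim] by blast
  have W0s: "vec.subspace W0" and W0W: "W0 \<subseteq> W" and invW0: "\<forall>A\<in>F. \<forall>x\<in>W0. A *v x \<in> W0"
    and neW0: "\<exists>x\<in>W0. x \<noteq> 0" using PW0 by (auto simp: P_def)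
  have scal: "\<exists>l. \<forall>x\<in>W0. A *v x = l *s x" if AF: "A \<in> F" for A
  proof -
    obtain v l where vW0: "v \<in> W0" and v0: "v \<noteq> 0" and Av: "A *v v = l *s v"
      using rayleigh[of A W0] sa AF W0s invW0 neW0 by blast
    define E where "E = {x\<in>W0. A *v x = l *s x}"
    have Es: "vec.subspace E"
      unfolding vec.subspace_def E_def
    proof (intro conjI ballI allI)
      show "0 \<in> {x \<in> W0. A *v x = l *s x}" using W0s by (simp add: vec.subspace_0)
    next
      fix x y assume "x \<in> {x \<in> W0. A *v x = l *s x}" "y \<in> {x \<in> W0. A *v x = l *s x}"
      thus "x + y \<in> {x \<in> W0. A *v x = l *s x}"
        using W0s by (simp add: vec.subspace_add matrix_vector_right_distrib vector_add_ldistrib)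
    next
      fix c x assume "x \<in> {x \<in> W0. A *v x = l *s x}"
      thus "c *s x \<in> {x \<in> W0. A *v x = l *s x}"
        using W0s by (simp add: vec.subspace_scale mv_scale vector_smult_assoc mult.commute)
    qed
    have invE: "\<forall>B\<in>F. \<forall>x\<in>E. B *v x \<in> E"
    proof (intro ballI)
      fix B x assume BF: "B \<in> F" and xE: "x \<in> E"
      have "B *v x \<in> W0" using invW0 BF xE by (simp add: E_def)
      moreover have "A *v (B *v x) = l *s (B *v x)"
      proof -
        have "A *v (B *v x) = (A ** B) *v x" by (simp add: matrix_vector_mul_assoc)
        also have "\<dots> = (B ** A) *v x" using comm AF BF by simp
        also have "\<dots> = B *v (l *s x)" using xE by (simp add: E_def matrix_vector_mul_assoc[symmetric])
        also have "\<dots> = l *s (B *v x)" by (simp add: mv_scale)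
        finally show ?thesis .
      qed
      ultimately show "B *v x \<in> E" by (simp add: E_def)
    qed
    have "P E" using Es invE vW0 v0 Av W0W by (auto simp: P_def E_def)
    hence "vec.dim W0 \<le> vec.dim E" by (rule mn)
    moreover have "E \<subseteq> W0" by (auto simp: E_def)
    ultimately have "E = W0" using vec.subspace_dim_equal[OF Es W0s] by blast
    thus ?thesis by (auto simp: E_def)
  qed
  obtain v where vW0: "v \<in> W0" and v0: "v \<noteq> 0" using neW0 by blast
  have "\<forall>A\<in>F. \<exists>l. A *v v = l *s v" using scal vW0 by blast
  thus ?thesis using vW0 v0 W0W by blast
qed


definition onb_eig :: "(complex^'n^'n) set \<Rightarrow> (complex^'n) set \<Rightarrow> bool" where
  "onb_eig F B \<longleftrightarrow> (\<forall>e\<in>B. norm e = 1) \<and> (\<forall>e\<in>B. \<forall>e'\<in>B. e \<noteq> e' \<longrightarrow> cinner_vec e e' = 0)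
      \<and> (\<forall>A\<in>F. \<forall>e\<in>B. \<exists>l. A *v e = l *s e)"

lemma cinner_unit: "norm e = 1 \<Longrightarrow> cinner_vec e e = 1"
  by (simp add: cinner_self)

lemma onb_cinner_sum:
  assumes "onb_eig F B" "finite B" "e \<in> B"
  shows "cinner_vec e (\<Sum>v\<in>B. u v *s v) = u e"
proof -
  have "cinner_vec e (\<Sum>v\<in>B. u v *s v) = (\<Sum>v\<in>B. u v * cinner_vec e v)"
    by (simp add: cinner_sum_right cinner_scale_right)
  also have "\<dots> = u e * cinner_vec e e + (\<Sum>v\<in>B - {e}. u v * cinner_vec e v)"
    using assms by (simp add: sum.remove)
  also have "(\<Sum>v\<in>B - {e}. u v * cinner_vec e v) = 0"
    using assms unfolding onb_eig_def by (intro sum.neutral) auto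
  finally show ?thesis using assms by (simp add: onb_eig_def cinner_unit)
qed

lemma onb_indep:
  assumes "onb_eig F B"
  shows "vec.independent B"
  unfolding vec.independent_explicit_module
proof (intro allI impI)
  fix t u v assume t: "finite t" "t \<subseteq> B" "(\<Sum>v\<in>t. u v *s v) = 0" "v \<in> t"
  have "onb_eig F t" using assms t(2) unfolding onb_eig_def by blast
  hence "cinner_vec v (\<Sum>v\<in>t. u v *s v) = u v" using t by (intro onb_cinner_sum) auto
  thus "u v = 0" using t by simp
qed

lemma spectral:
  fixes F :: "(complex^'n^'n) set"
  assumes sa: "\<forall>A\<in>F. sadj A" and comm: "\<forall>A\<in>F. \<forall>B\<in>F. A ** B = B ** A"
  shows "\<exists>B. finite B \<and> onb_eig F B \<and> (\<Sum>e\<in>B. outer e e) = mat 1"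
proof -
  define N where "N = vec.dim (UNIV :: (complex^'n) set)"
  have cardle: "finite B \<and> card B \<le> N" if "onb_eig F B" for B
    using onb_indep[OF that] vec.finiteI_independent vec.independent_card_le_dim[of B UNIV]
    by (auto simp: N_def)
  have "onb_eig F {}" by (simp add: onb_eig_def)
  then obtain B where QB: "onb_eig F B" and mx: "\<And>B'. onb_eig F B' \<Longrightarrow> N - card B \<le> N - card B'"
    using ex_has_least_nat[of "onb_eig F" "{}" "\<lambda>B. N - card B"] by blast
  have fB: "finite B" and cB: "card B \<le> N" using cardle[OF QB] by auto
  define W where "W = {x. \<forall>e\<in>B. cinner_vec e x = 0}"
  have Ws: "vec.subspace W"
    unfolding vec.subspace_def W_def by (simp add: cinner_add_right cinner_scale_right)
  have invW: "\<forall>A\<in>F. \<forall>x\<in>W. A *v x \<in> W"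
  proof (intro ballI)
    fix A x assume AF: "A \<in> F" and xW: "x \<in> W"
    have "cinner_vec e (A *v x) = 0" if eB: "e \<in> B" for e
    proof -
      obtain l where "A *v e = l *s e" using QB AF eB unfolding onb_eig_def by blast
      moreover have "cinner_vec e (A *v x) = cinner_vec (A *v e) x" using sa AF unfolding sadj_def by blast
      ultimately show ?thesis using xW eB by (simp add: W_def cinner_scale_left)
    qed
    thus "A *v x \<in> W" by (simp add: W_def)
  qed
  have W0: "\<forall>x\<in>W. x = 0"
  proof (rule ccontr)
    assume "\<not> (\<forall>x\<in>W. x = 0)"
    hence "\<exists>x\<in>W. x \<noteq> 0" by blast
    then obtain v where vW: "v \<in> W" and v0: "v \<noteq> 0" and ev: "\<forall>A\<in>F. \<exists>l. A *v v = l *s v"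
      using common_eigvec[OF sa comm Ws invW] by blast
    define u where "u = complex_of_real (1 / norm v) *s v"
    have nu: "norm u = 1" using v0 by (simp add: u_def norm_scale norm_divide)
    have uW: "u \<in> W" using Ws vW unfolding u_def by (simp add: vec.subspace_scale)
    have eu: "\<forall>A\<in>F. \<exists>l. A *v u = l *s u"
    proof
      fix A assume "A \<in> F"
      then obtain l where "A *v v = l *s v" using ev by blast
      hence "A *v u = l *s u" by (simp add: u_def mv_scale vector_smult_assoc mult.commute)
      thus "\<exists>l. A *v u = l *s u" by blast
    qed
    have uB: "u \<notin> B"
    proof
      assume "u \<in> B"
      hence "cinner_vec u u = 0" using uW by (simp add: W_def)
      thus False using nu by (simp add: cinner_unit)
    qed
    have o1: "cinner_vec e u = 0" if "e \<in> B" for e using uW that by (simp add: W_def)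
    have o2: "cinner_vec u e = 0" if "e \<in> B" for e
      using o1[OF that] cinner_cnj[of e u] by simp
    have "onb_eig F (insert u B)"
      using QB nu eu o1 o2 unfolding onb_eig_def by auto
    hence "N - card B \<le> N - card (insert u B)" by (rule mx)
    moreover have "card (insert u B) = card B + 1" using fB uB by simp
    moreover have "card (insert u B) \<le> N" using cardle[OF \<open>onb_eig F (insert u B)\<close>] by simp
    ultimately show False by simp
  qed
  have "(\<Sum>e\<in>B. outer e e) *v x = x" for x
  proof -
    define y where "y = x - (\<Sum>e\<in>B. cinner_vec e x *s e)"
    have "cinner_vec e' y = 0" if "e' \<in> B" for e'
      using onb_cinner_sum[OF QB fB that, of "\<lambda>e. cinner_vec e x"] by (simp add: y_def cinner_diff_right)
    hence "y \<in> W" by (simp add: W_def)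
    hence "y = 0" using W0 by blast
    hence "x = (\<Sum>e\<in>B. cinner_vec e x *s e)" by (simp add: y_def)
    thus ?thesis by (simp add: sum_mv outer_mv)
  qed
  hence "(\<Sum>e\<in>B. outer e e) = mat 1" by (simp add: matrix_eq)
  thus ?thesis using fB QB by blast
qed



lemma psd_sadj: "psd X \<Longrightarrow> sadj X"
  by (rule adj_sadj[OF psd_herm])

lemma eig_val:
  assumes "onb_eig F B" "A \<in> F" "e \<in> B"
  shows "A *v e = cinner_vec e (A *v e) *s e"
proof -
  obtain l where l: "A *v e = l *s e" using assms unfolding onb_eig_def by blast
  have "cinner_vec e (A *v e) = l" using assms unfolding onb_eig_def
    by (simp add: l cinner_scale_right cinner_unit)
  thus ?thesis using l by simp
qed

lemma decomp:
  assumes "finite B" "onb_eig F B" "(\<Sum>e\<in>B. outer e e) = mat 1" "A \<in> F"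
  shows "A = (\<Sum>e\<in>B. smat (cinner_vec e (A *v e)) (outer e e))"
proof -
  have "A = A ** (\<Sum>e\<in>B. outer e e)" using assms by simp
  also have "\<dots> = (\<Sum>e\<in>B. outer (A *v e) e)" by (simp add: sum_mmult_right mult_outer)
  also have "\<dots> = (\<Sum>e\<in>B. smat (cinner_vec e (A *v e)) (outer e e))"
  proof (rule sum.cong[OF refl])
    fix e assume "e \<in> B"
    hence "A *v e = cinner_vec e (A *v e) *s e" using eig_val assms by blast
    thus "outer (A *v e) e = smat (cinner_vec e (A *v e)) (outer e e)"
      by (metis outer_scale)
  qed
  finally show ?thesis .
qed

lemma psd_spectral:
  assumes "psd X"
  shows "\<exists>B. finite B \<and> onb_eig {X} B \<and> (\<Sum>e\<in>B. outer e e) = mat 1 \<and>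
     X = (\<Sum>e\<in>B. smat (complex_of_real (Re (cinner_vec e (X *v e)))) (outer e e))"
proof -
  obtain B where B: "finite B" "onb_eig {X} B" "(\<Sum>e\<in>B. outer e e) = mat 1"
    using spectral[of "{X}"] psd_sadj[OF assms] by auto
  have "X = (\<Sum>e\<in>B. smat (cinner_vec e (X *v e)) (outer e e))"
    using decomp[OF B] by simp
  also have "\<dots> = (\<Sum>e\<in>B. smat (complex_of_real (Re (cinner_vec e (X *v e)))) (outer e e))"
    using psdD(1)[OF assms] by metis
  finally show ?thesis using B by blast
qed

lemma trace_psd_decomp:
  assumes "psd X" "psd Y"
  shows "\<exists>B a b. finite B \<and> (\<forall>e\<in>B. a e \<ge> 0 \<and> b e \<ge> (0::real)) \<and>
     X = (\<Sum>e\<in>B. smat (complex_of_real (a e)) (outer e e)) \<and>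
     (\<forall>e\<in>B. cinner_vec e (Y *v e) = complex_of_real (b e)) \<and>
     trace (X ** Y) = complex_of_real (\<Sum>e\<in>B. a e * b e)"
proof -
  obtain B where B: "finite B" "onb_eig {X} B" "(\<Sum>e\<in>B. outer e e) = mat 1"
    and X: "X = (\<Sum>e\<in>B. smat (complex_of_real (Re (cinner_vec e (X *v e)))) (outer e e))"
    using psd_spectral[OF assms(1)] by blast
  define a where "a e = Re (cinner_vec e (X *v e))" for e
  define b where "b e = Re (cinner_vec e (Y *v e))" for e
  have ce: "cinner_vec e (Y *v e) = complex_of_real (b e)" for e
    unfolding b_def by (rule psdD(1)[OF assms(2)])
  have Xa: "X = (\<Sum>e\<in>B. smat (complex_of_real (a e)) (outer e e))" using X by (simp add: a_def)
  have "trace (X ** Y) = (\<Sum>e\<in>B. complex_of_real (a e) * cinner_vec e (Y *v e))"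
    by (subst Xa) (simp add: sum_mmult_left smat_mult_left trace_sum trace_smat trace_outer_mult)
  also have "\<dots> = complex_of_real (\<Sum>e\<in>B. a e * b e)"
    by (simp add: ce)
  finally have tr: "trace (X ** Y) = complex_of_real (\<Sum>e\<in>B. a e * b e)" .
  have "\<forall>e\<in>B. a e \<ge> 0 \<and> b e \<ge> 0" using assms by (simp add: a_def b_def psdD(2))
  moreover have "\<forall>e\<in>B. cinner_vec e (Y *v e) = complex_of_real (b e)"
    using ce by blast
  ultimately show ?thesis using B(1) Xa tr by blast
qed

lemma trace_psd_nonneg:
  assumes "psd X" "psd Y"
  shows "trace (X ** Y) = complex_of_real (Re (trace (X ** Y)))" "Re (trace (X ** Y)) \<ge> 0"
proof -
  obtain B a b where "finite B" "\<forall>e\<in>B. a e \<ge> 0 \<and> b e \<ge> (0::real)"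
     and "X = (\<Sum>e\<in>B. smat (complex_of_real (a e)) (outer e e))"
     and "\<forall>e\<in>B. cinner_vec e (Y *v e) = complex_of_real (b e)"
     and "trace (X ** Y) = complex_of_real (\<Sum>e\<in>B. a e * b e)"
    using trace_psd_decomp[OF assms] by (elim exE conjE) 
  thus "trace (X ** Y) = complex_of_real (Re (trace (X ** Y)))" "Re (trace (X ** Y)) \<ge> 0"
    by (simp_all add: sum_nonneg)
qed

lemma psd_kernel: "psd E \<Longrightarrow> Re (cinner_vec v (E *v v)) = 0 \<Longrightarrow> E *v v = 0"
  by (rule kernel_lemma[of E UNIV]) (auto simp: psd_sadj vec.subspace_UNIV psdD(2))

lemma trace_zero_prod:
  assumes "psd X" "psd Y" "trace (X ** Y) = 0"
  shows "Y ** X = 0"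
proof -
  obtain B a b where B: "finite B" "\<forall>e\<in>B. a e \<ge> 0 \<and> b e \<ge> (0::real)"
    and X: "X = (\<Sum>e\<in>B. smat (complex_of_real (a e)) (outer e e))"
    and b: "\<forall>e\<in>B. cinner_vec e (Y *v e) = complex_of_real (b e)"
    and tr: "trace (X ** Y) = complex_of_real (\<Sum>e\<in>B. a e * b e)"
    using trace_psd_decomp[OF assms(1,2)] by (elim exE conjE)
  have "complex_of_real (\<Sum>e\<in>B. a e * b e) = 0" using tr assms(3) by metis
  hence "(\<Sum>e\<in>B. a e * b e) = 0" by (simp only: of_real_eq_0_iff)
  hence z: "\<forall>e\<in>B. a e * b e = 0" using B by (subst (asm) sum_nonneg_eq_0_iff) auto
  have "Y ** X = (\<Sum>e\<in>B. smat (complex_of_real (a e)) (outer (Y *v e) e))"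
    by (subst X) (simp add: sum_mmult_right smat_mult_right mult_outer)
  also have "\<dots> = (\<Sum>e\<in>B. 0)"
  proof (rule sum.cong[OF refl])
    fix e assume eB: "e \<in> B"
    show "smat (complex_of_real (a e)) (outer (Y *v e) e) = 0"
    proof (cases "a e = 0")
      case True thus ?thesis by simp
    next
      case False
      have "a e * b e = 0" using z eB by blast
      hence "b e = 0" using False by simp
      hence "Re (cinner_vec e (Y *v e)) = 0" using b eB by simp
      hence "Y *v e = 0" using psd_kernel assms(2) by blast
      thus ?thesis by (simp add: outer_def smat_def vec_eq_iff)
    qed
  qed
  finally show ?thesis by simp
qed



definition stat :: "nat set \<Rightarrow> (nat \<Rightarrow> nat \<Rightarrow> real) \<Rightarrow> (nat \<Rightarrow> real) \<Rightarrow> bool" where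
  "stat L S a \<longleftrightarrow> (\<forall>m\<in>L. (\<Sum>l\<in>L. a l * S l m) = a m)"

definition Ph :: "(nat \<Rightarrow> complex^'n^'n) \<Rightarrow> nat set \<Rightarrow> (nat \<Rightarrow> real) \<Rightarrow> complex^'n^'n" where
  "Ph \<sigma> L a = (\<Sum>l\<in>L. smat (complex_of_real (a l)) (\<sigma> l))"

lemma stat_cong: "(\<And>l. l \<in> L \<Longrightarrow> a l = b l) \<Longrightarrow> stat L S a \<Longrightarrow> stat L S b"
  unfolding stat_def by (metis (no_types, lifting) sum.cong)

lemma Ph_cong: "(\<And>l. l \<in> L \<Longrightarrow> a l = b l) \<Longrightarrow> Ph \<sigma> L a = Ph \<sigma> L b"
  unfolding Ph_def by (metis (no_types, lifting) sum.cong)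

lemma stat_lin: "stat L S a \<Longrightarrow> stat L S b \<Longrightarrow> stat L S (\<lambda>l. a l + c * b l)"
  unfolding stat_def by (simp add: distrib_right sum.distrib mult.assoc sum_distrib_left[symmetric])

lemma Ph_lin: "Ph \<sigma> L (\<lambda>l. a l + c * b l) = Ph \<sigma> L a + smat (complex_of_real c) (Ph \<sigma> L b)"
  unfolding Ph_def by (simp add: smat_add2 sum.distrib smat_sum smat_smat)

lemma Ph_zero: "(\<And>l. l \<in> L \<Longrightarrow> a l = 0) \<Longrightarrow> Ph \<sigma> L a = 0"
  unfolding Ph_def by (simp add: sum.neutral)

lemma pospart_stat:
  assumes fin: "finite L" and S0: "\<forall>l\<in>L. \<forall>m\<in>L. S l m \<ge> 0"
    and rows: "\<forall>l\<in>L. (\<Sum>m\<in>L. S l m) = 1" and st: "stat L S \<mu>"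
  shows "stat L S (\<lambda>l. max 0 (\<mu> l))"
proof -
  define p where "p l = max 0 (\<mu> l)" for l
  define g where "g m = (\<Sum>l\<in>L. p l * S l m)" for m
  have ge: "g m \<ge> p m" if mL: "m \<in> L" for m
  proof -
    have "g m \<ge> (\<Sum>l\<in>L. \<mu> l * S l m)" unfolding g_def
      using S0 mL by (intro sum_mono mult_right_mono) (auto simp: p_def)
    hence "g m \<ge> \<mu> m" using st mL by (simp add: stat_def)
    moreover have "g m \<ge> 0" unfolding g_def using S0 mL by (intro sum_nonneg mult_nonneg_nonneg) (auto simp: p_def)
    ultimately show ?thesis by (simp add: p_def)
  qed
  have "(\<Sum>m\<in>L. g m) = (\<Sum>m\<in>L. \<Sum>l\<in>L. p l * S l m)" by (simp add: g_def)
  also have "\<dots> = (\<Sum>l\<in>L. \<Sum>m\<in>L. p l * S l m)" by (rule sum.swap)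
  also have "\<dots> = (\<Sum>l\<in>L. p l * (\<Sum>m\<in>L. S l m))" by (simp only: sum_distrib_left)
  also have "\<dots> = (\<Sum>l\<in>L. p l)" using rows by simp
  finally have e: "(\<Sum>m\<in>L. g m) = (\<Sum>m\<in>L. p m)" .
  have s0: "(\<Sum>m\<in>L. g m - p m) = 0" using e by (simp add: sum_subtractf)
  have nn: "\<And>m. m \<in> L \<Longrightarrow> g m - p m \<ge> 0" using ge by simp
  have z: "\<forall>m\<in>L. g m - p m = 0"
    using sum_nonneg_eq_0_iff[OF fin nn] s0 by simp
  show ?thesis unfolding stat_def
  proof
    fix m assume "m \<in> L"
    hence "g m = p m" using z by simp
    thus "(\<Sum>l\<in>L. max 0 (\<mu> l) * S l m) = max 0 (\<mu> m)" by (simp add: g_def p_def)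
  qed
qed


lemma comm_ind:
  fixes \<sigma> :: "nat \<Rightarrow> complex^'n^'n"
  assumes fin: "finite L" and S0: "\<forall>l\<in>L. \<forall>m\<in>L. S l m \<ge> 0"
    and rows: "\<forall>l\<in>L. (\<Sum>m\<in>L. S l m) = 1"
    and orth: "\<And>a b. \<forall>l\<in>L. a l \<ge> 0 \<Longrightarrow> stat L S a \<Longrightarrow> \<forall>l\<in>L. b l \<ge> 0 \<Longrightarrow> stat L S b \<Longrightarrow>
        \<forall>l\<in>L. a l = 0 \<or> b l = 0 \<Longrightarrow> Ph \<sigma> L a ** Ph \<sigma> L b = 0"
  shows "\<forall>l\<in>L. a l \<ge> 0 \<Longrightarrow> stat L S a \<Longrightarrow> \<forall>l\<in>L. b l \<ge> 0 \<Longrightarrow> stat L S b \<Longrightarrow>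
     Ph \<sigma> L a ** Ph \<sigma> L b = Ph \<sigma> L b ** Ph \<sigma> L a"
proof (induction "card {l\<in>L. a l \<noteq> 0} + card {l\<in>L. b l \<noteq> 0}" arbitrary: a b rule: less_induct)
  case less
  note a0 = less.prems(1) and sta = less.prems(2) and b0 = less.prems(3) and stb = less.prems(4)
  define SA where "SA = {l\<in>L. a l \<noteq> 0}"
  define SB where "SB = {l\<in>L. b l \<noteq> 0}"
  have fSA: "finite SA" and fSB: "finite SB" using fin by (simp_all add: SA_def SB_def)
  show ?case
  proof (cases "SA \<subseteq> SB")
    case sub: True
    show ?thesis
    proof (cases "SA = {}")
      case True
      hence "Ph \<sigma> L a = 0" by (intro Ph_zero) (auto simp: SA_def)
      thus ?thesis by simp
    next
      case False
      define f where "f l = b l / a l" for l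
      have "Min (f ` SA) \<in> f ` SA" using fSA False by (intro Min_in) auto
      then obtain l0 where l0: "l0 \<in> SA" "f l0 = Min (f ` SA)" by (metis imageE)
      have fmin: "f l0 \<le> f l" if "l \<in> SA" for l
        using l0(2) Min_le[of "f ` SA" "f l"] fSA that by simp
      define t where "t = f l0"
      have al0: "a l0 > 0" using l0(1) a0 by (auto simp: SA_def order_le_less)
      have bl0: "b l0 > 0" using l0(1) sub b0 by (auto simp: SB_def order_le_less)
      define d where "d l = b l + (- t) * a l" for l
      have d0: "\<forall>l\<in>L. d l \<ge> 0"
      proof
        fix l assume lL: "l \<in> L"
        show "d l \<ge> 0"
        proof (cases "a l = 0")
          case True thus ?thesis using b0 lL by (simp add: d_def)
        next
          case False
          hence lSA: "l \<in> SA" and alp: "a l > 0" using lL a0 by (auto simp: SA_def order_le_less)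
          have "t \<le> b l / a l" using fmin[OF lSA] by (simp add: t_def f_def)
          hence "t * a l \<le> b l" using alp by (simp add: le_divide_eq)
          thus ?thesis by (simp add: d_def)
        qed
      qed
      have std: "stat L S d" unfolding d_def by (rule stat_lin[OF stb sta])
      have "{l\<in>L. d l \<noteq> 0} \<subseteq> SB - {l0}"
      proof
        fix l assume "l \<in> {l\<in>L. d l \<noteq> 0}"
        hence lL: "l \<in> L" and dl: "d l \<noteq> 0" by auto
        have "b l \<noteq> 0"
        proof
          assume bl: "b l = 0"
          hence "l \<notin> SB" by (simp add: SB_def)
          hence "l \<notin> SA" using sub by blast
          hence "a l = 0" using lL by (simp add: SA_def)
          thus False using dl bl by (simp add: d_def)
        qed
        moreover have "l \<noteq> l0"
        proof
          assume "l = l0"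
          hence "d l = 0" using al0 by (simp add: d_def t_def f_def)
          thus False using dl by simp
        qed
        ultimately show "l \<in> SB - {l0}" using lL by (simp add: SB_def)
      qed
      moreover have "l0 \<in> SB" using l0(1) sub by blast
      ultimately have "{l\<in>L. d l \<noteq> 0} \<subset> SB" by blast
      hence "card {l\<in>L. d l \<noteq> 0} < card SB" using fSB by (rule psubset_card_mono[rotated])
      hence lt: "card {l\<in>L. a l \<noteq> 0} + card {l\<in>L. d l \<noteq> 0} < card {l\<in>L. a l \<noteq> 0} + card {l\<in>L. b l \<noteq> 0}"
        by (simp add: SB_def)
      have IH: "Ph \<sigma> L a ** Ph \<sigma> L d = Ph \<sigma> L d ** Ph \<sigma> L a"
        by (rule less.hyps[OF lt a0 sta d0 std])
      have "Ph \<sigma> L b = Ph \<sigma> L (\<lambda>l. d l + t * a l)" by (rule Ph_cong) (simp add: d_def)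
      also have "\<dots> = Ph \<sigma> L d + smat (complex_of_real t) (Ph \<sigma> L a)" by (rule Ph_lin)
      finally have Pb: "Ph \<sigma> L b = Ph \<sigma> L d + smat (complex_of_real t) (Ph \<sigma> L a)" .
      show ?thesis unfolding Pb
        by (simp add: matrix_add_ldistrib mmult_add_rdistrib smat_mult_left smat_mult_right IH)
    qed
  next
    case nsub: False
    define s where "s = (\<Sum>l\<in>SB. a l / b l)"
    define a1 where "a1 l = (if b l = 0 then a l else 0)" for l
    define a2 where "a2 l = (if b l = 0 then 0 else a l)" for l
    have bpos: "b l > 0" if "l \<in> SB" for l using that b0 by (auto simp: SB_def order_le_less)
    have a1eq: "max 0 (a l + (- s) * b l) = a1 l" if lL: "l \<in> L" for l
    proof (cases "b l = 0")
      case True thus ?thesis using a0 lL by (simp add: a1_def)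
    next
      case False
      hence lSB: "l \<in> SB" using lL by (simp add: SB_def)
      have "a l / b l \<le> s" unfolding s_def
        using fSB lSB a0 b0 by (intro member_le_sum) (auto simp: SB_def)
      hence "a l \<le> s * b l" using bpos[OF lSB] by (simp add: divide_le_eq)
      thus ?thesis using False by (simp add: a1_def)
    qed
    have sta1: "stat L S a1"
      using stat_cong[OF a1eq pospart_stat[OF fin S0 rows stat_lin[OF sta stb]]] by simp
    have a10: "\<forall>l\<in>L. a1 l \<ge> 0" using a0 by (simp add: a1_def)
    have sta2: "stat L S a2"
      by (rule stat_cong[OF _ stat_lin[OF sta sta1, of "-1"]]) (simp add: a1_def a2_def)
    have a20: "\<forall>l\<in>L. a2 l \<ge> 0" using a0 by (simp add: a2_def)
    have "{l\<in>L. a2 l \<noteq> 0} \<subset> SA"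
    proof -
      have "{l\<in>L. a2 l \<noteq> 0} \<subseteq> SA" by (auto simp: a2_def SA_def)
      moreover obtain l where "l \<in> SA" "l \<notin> SB" using nsub by blast
      moreover have "l \<notin> {l\<in>L. a2 l \<noteq> 0}" using \<open>l \<notin> SB\<close> by (simp add: a2_def SB_def)
      ultimately show ?thesis by blast
    qed
    hence "card {l\<in>L. a2 l \<noteq> 0} < card SA" using fSA by (rule psubset_card_mono[rotated])
    hence lt: "card {l\<in>L. a2 l \<noteq> 0} + card {l\<in>L. b l \<noteq> 0} < card {l\<in>L. a l \<noteq> 0} + card {l\<in>L. b l \<noteq> 0}"
      by (simp add: SA_def)
    have IH: "Ph \<sigma> L a2 ** Ph \<sigma> L b = Ph \<sigma> L b ** Ph \<sigma> L a2"
      by (rule less.hyps[OF lt a20 sta2 b0 stb])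
    have disj: "\<forall>l\<in>L. a1 l = 0 \<or> b l = 0" by (simp add: a1_def)
    have o1: "Ph \<sigma> L a1 ** Ph \<sigma> L b = 0" by (rule orth[OF a10 sta1 b0 stb disj])
    have o2: "Ph \<sigma> L b ** Ph \<sigma> L a1 = 0" by (rule orth[OF b0 stb a10 sta1]) (use disj in blast)
    have "Ph \<sigma> L a = Ph \<sigma> L (\<lambda>l. a1 l + 1 * a2 l)" by (rule Ph_cong) (simp add: a1_def a2_def)
    also have "\<dots> = Ph \<sigma> L a1 + Ph \<sigma> L a2" by (simp only: Ph_lin smat_one of_real_1)
    finally have Pa: "Ph \<sigma> L a = Ph \<sigma> L a1 + Ph \<sigma> L a2" .
    show ?thesis unfolding Pa
      by (simp add: matrix_add_ldistrib mmult_add_rdistrib o1 o2 IH)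
  qed
qed



lemma trace_Ph_mult: "trace (Ph \<sigma> L a ** M) = (\<Sum>l\<in>L. complex_of_real (a l) * trace (\<sigma> l ** M))"
  unfolding Ph_def by (simp add: sum_mmult_left smat_mult_left trace_sum trace_smat)

lemma psd_Ph: "\<forall>l\<in>L. a l \<ge> 0 \<Longrightarrow> \<forall>l\<in>L. psd (\<sigma> l) \<Longrightarrow> psd (Ph \<sigma> L a)"
  unfolding Ph_def by (intro psd_sum psd_smat) auto

lemma fixed_point:
  fixes \<rho> :: "complex^'n^'n"
  assumes H: "\<forall>(K::nat set) M. is_povm K M \<longrightarrow>
           (\<forall>k\<in>K. trace (\<rho> ** M k) = (\<Sum>l\<in>L. trace (\<rho> ** G l) * trace (\<sigma> l ** M k)))"
  shows "\<rho> = (\<Sum>l\<in>L. smat (trace (\<rho> ** G l)) (\<sigma> l))"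
proof -
  define P where "P = (\<Sum>l\<in>L. smat (trace (\<rho> ** G l)) (\<sigma> l))"
  define D where "D = \<rho> - P"
  have small: "cinner_vec v (D *v v) = 0" if nv: "norm v \<le> 1" for v
  proof -
    define M where "M k = (if k = (0::nat) then outer v v else mat 1 - outer v v)" for k
    have povm: "is_povm {0, 1} M"
      unfolding is_povm_def M_def using psd_outer psd_id_minus_outer[OF nv] by simp
    have "trace (\<rho> ** M 0) = (\<Sum>l\<in>L. trace (\<rho> ** G l) * trace (\<sigma> l ** M 0))"
      using H povm by blast
    hence "cinner_vec v (\<rho> *v v) = (\<Sum>l\<in>L. trace (\<rho> ** G l) * cinner_vec v (\<sigma> l *v v))"
      by (simp add: M_def trace_mult_outer)
    also have "\<dots> = cinner_vec v (P *v v)"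
      by (simp add: P_def sum_mv smat_mv cinner_sum_right cinner_scale_right)
    finally show ?thesis by (simp add: D_def matrix_vector_mult_diff_rdistrib cinner_diff_right)
  qed
  have "cinner_vec v (D *v v) = 0" for v
  proof (cases "v = 0")
    case True thus ?thesis by simp
  next
    case False
    define u where "u = complex_of_real (1 / norm v) *s v"
    have nu: "norm u = 1" using False by (simp add: u_def norm_scale norm_divide)
    have vu: "v = complex_of_real (norm v) *s u" using False
      by (simp add: u_def vector_smult_assoc)
    have "cinner_vec v (D *v v) = complex_of_real ((cmod (complex_of_real (norm v)))^2) * cinner_vec u (D *v u)"
      by (subst vu, subst vu) (rule q_scale)
    also have "cinner_vec u (D *v u) = 0" using small nu by simp
    finally show ?thesis by simp
  qed
  hence "D = 0" by (rule form_zero)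
  thus ?thesis by (simp add: D_def P_def)
qed


lemma hard_dir:
  fixes T :: "(complex^'n^'n) set"
  assumes states: "\<forall>\<rho>\<in>T. is_state \<rho>" and nc: "no_contextuality_proof T"
  shows "\<forall>\<rho>\<in>T. \<forall>\<rho>'\<in>T. \<rho> ** \<rho>' = \<rho>' ** \<rho>"
proof -
  obtain L G \<sigma> where povm: "is_povm L G" and st: "\<forall>l\<in>L. is_state (\<sigma> l :: complex^'n^'n)"
    and H: "\<forall>\<rho>\<in>T. \<forall>(K::nat set) M. is_povm K M \<longrightarrow>
           (\<forall>k\<in>K. trace (\<rho> ** M k) = (\<Sum>l\<in>L. trace (\<rho> ** G l) * trace (\<sigma> l ** M k)))"
    using nc unfolding no_contextuality_proof_def by blast
  have fin: "finite L" and psdG: "\<forall>l\<in>L. psd (G l)" and sumG: "(\<Sum>l\<in>L. G l) = mat 1"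
    using povm by (simp_all add: is_povm_def)
  have psds: "\<forall>l\<in>L. psd (\<sigma> l)" and trs: "\<forall>l\<in>L. trace (\<sigma> l) = 1"
    using st by (simp_all add: is_state_def)
  define S where "S l m = Re (trace (\<sigma> l ** G m))" for l m
  have Seq: "trace (\<sigma> l ** G m) = complex_of_real (S l m)" if "l \<in> L" "m \<in> L" for l m
    unfolding S_def using trace_psd_nonneg(1)[OF bspec[OF psds that(1)] bspec[OF psdG that(2)]] .
  have S0: "\<forall>l\<in>L. \<forall>m\<in>L. S l m \<ge> 0"
  proof (intro ballI)
    fix l m assume "l \<in> L" "m \<in> L"
    thus "S l m \<ge> 0" unfolding S_def using trace_psd_nonneg(2)[OF bspec[OF psds] bspec[OF psdG]] by blast
  qed
  have rows: "\<forall>l\<in>L. (\<Sum>m\<in>L. S l m) = 1"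
  proof
    fix l assume lL: "l \<in> L"
    have "(\<Sum>m\<in>L. S l m) = Re (\<Sum>m\<in>L. trace (\<sigma> l ** G m))" by (simp add: S_def)
    also have "(\<Sum>m\<in>L. trace (\<sigma> l ** G m)) = trace (\<sigma> l ** (\<Sum>m\<in>L. G m))"
      by (simp add: sum_mmult_right trace_sum)
    also have "\<dots> = 1" using sumG trs lL by simp
    finally show "(\<Sum>m\<in>L. S l m) = 1" by simp
  qed
  have trPh: "trace (Ph \<sigma> L a ** G m) = complex_of_real (\<Sum>l\<in>L. a l * S l m)" if "m \<in> L" for a m
    unfolding trace_Ph_mult using that by (simp add: Seq)
  have orth: "Ph \<sigma> L a ** Ph \<sigma> L b = 0"
    if a0: "\<forall>l\<in>L. a l \<ge> 0" and sta: "stat L S a" and b0: "\<forall>l\<in>L. b l \<ge> 0" and stb: "stat L S b"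
      and disj: "\<forall>l\<in>L. a l = 0 \<or> b l = 0" for a b
  proof -
    define X where "X = Ph \<sigma> L a"
    define Y where "Y = Ph \<sigma> L b"
    have pX: "psd X" unfolding X_def by (rule psd_Ph[OF a0 psds])
    have pY: "psd Y" unfolding Y_def by (rule psd_Ph[OF b0 psds])
    define SB where "SB = {l\<in>L. b l \<noteq> 0}"
    define SC where "SC = L - SB"
    define EB where "EB = (\<Sum>m\<in>SB. G m)"
    define EC where "EC = (\<Sum>m\<in>SC. G m)"
    have pEB: "psd EB" unfolding EB_def using psdG by (intro psd_sum) (auto simp: SB_def)
    have pEC: "psd EC" unfolding EC_def using psdG by (intro psd_sum) (auto simp: SC_def)
    have EBC: "EB + EC = mat 1"
    proof -
      have "SB \<subseteq> L" by (auto simp: SB_def)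
      hence "(\<Sum>m\<in>L. G m) = (\<Sum>m\<in>SB. G m) + (\<Sum>m\<in>L - SB. G m)"
        using fin by (metis add.commute sum.subset_diff)
      thus ?thesis using sumG by (simp add: EB_def EC_def SC_def)
    qed
    have trX: "trace (X ** G m) = complex_of_real (a m)" if "m \<in> L" for m
      unfolding X_def trPh[OF that] using sta that by (simp add: stat_def)
    have trY: "trace (Y ** G m) = complex_of_real (b m)" if "m \<in> L" for m
      unfolding Y_def trPh[OF that] using stb that by (simp add: stat_def)
    have "trace (EB ** X) = trace (X ** EB)" by (rule trace_mul_sym)
    also have "\<dots> = (\<Sum>m\<in>SB. trace (X ** G m))" by (simp add: EB_def sum_mmult_right trace_sum)
    also have "\<dots> = (\<Sum>m\<in>SB. 0)"
    proof (rule sum.cong[OF refl])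
      fix m assume mB: "m \<in> SB"
      hence "m \<in> L" "b m \<noteq> 0" by (auto simp: SB_def)
      hence "a m = 0" using disj by blast
      thus "trace (X ** G m) = 0" using trX[OF \<open>m \<in> L\<close>] by simp
    qed
    finally have "trace (EB ** X) = 0" by simp
    hence XEB: "X ** EB = 0" by (rule trace_zero_prod[OF pEB pX])
    have "trace (Y ** EC) = (\<Sum>m\<in>SC. trace (Y ** G m))" by (simp add: EC_def sum_mmult_right trace_sum)
    also have "\<dots> = (\<Sum>m\<in>SC. 0)"
    proof (rule sum.cong[OF refl])
      fix m assume mC: "m \<in> SC"
      hence "m \<in> L" "b m = 0" by (auto simp: SC_def SB_def)
      thus "trace (Y ** G m) = 0" using trY[OF \<open>m \<in> L\<close>] by simp
    qed
    finally have "trace (Y ** EC) = 0" by simp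
    hence ECY: "EC ** Y = 0" by (rule trace_zero_prod[OF pY pEC])
    have "X ** Y = X ** (EB + EC) ** Y" using EBC by simp
    also have "\<dots> = (X ** EB) ** Y + X ** (EC ** Y)"
      by (simp add: matrix_add_ldistrib mmult_add_rdistrib matrix_mul_assoc)
    also have "\<dots> = 0" using XEB ECY by simp
    finally show ?thesis by (simp add: X_def Y_def)
  qed
  have rep: "\<exists>p. (\<forall>l\<in>L. p l \<ge> 0) \<and> stat L S p \<and> Ph \<sigma> L p = \<rho>" if rT: "\<rho> \<in> T" for \<rho>
  proof -
    have prho: "psd \<rho>" using states rT by (simp add: is_state_def)
    define p where "p l = Re (trace (\<rho> ** G l))" for l
    have peq: "trace (\<rho> ** G l) = complex_of_real (p l)" if "l \<in> L" for l
      unfolding p_def using trace_psd_nonneg(1)[OF prho bspec[OF psdG that]] .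
    have p0: "\<forall>l\<in>L. p l \<ge> 0"
    proof
      fix l assume "l \<in> L"
      thus "p l \<ge> 0" unfolding p_def using trace_psd_nonneg(2)[OF prho bspec[OF psdG]] by blast
    qed
    have "\<rho> = (\<Sum>l\<in>L. smat (trace (\<rho> ** G l)) (\<sigma> l))"
      by (rule fixed_point[OF bspec[OF H rT]])
    also have "\<dots> = Ph \<sigma> L p" unfolding Ph_def by (rule sum.cong[OF refl]) (simp add: peq)
    finally have Pp: "Ph \<sigma> L p = \<rho>" by simp
    have "stat L S p" unfolding stat_def
    proof
      fix m assume mL: "m \<in> L"
      have "complex_of_real (\<Sum>l\<in>L. p l * S l m) = trace (Ph \<sigma> L p ** G m)" by (rule trPh[OF mL, symmetric])
      also have "\<dots> = trace (\<rho> ** G m)" by (simp only: Pp)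
      also have "\<dots> = complex_of_real (p m)" by (rule peq[OF mL])
      finally show "(\<Sum>l\<in>L. p l * S l m) = p m" by (simp only: of_real_eq_iff)
    qed
    thus ?thesis using p0 Pp by blast
  qed
  show ?thesis
  proof (intro ballI)
    fix \<rho> \<rho>' assume r: "\<rho> \<in> T" and r': "\<rho>' \<in> T"
    obtain p where p: "\<forall>l\<in>L. p l \<ge> 0" "stat L S p" "Ph \<sigma> L p = \<rho>" using rep[OF r] by blast
    obtain q where q: "\<forall>l\<in>L. q l \<ge> 0" "stat L S q" "Ph \<sigma> L q = \<rho>'" using rep[OF r'] by blast
    have "Ph \<sigma> L p ** Ph \<sigma> L q = Ph \<sigma> L q ** Ph \<sigma> L p"
      by (rule comm_ind[OF fin S0 rows orth p(1,2) q(1,2)])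
    thus "\<rho> ** \<rho>' = \<rho>' ** \<rho>" using p(3) q(3) by simp
  qed
qed


lemma easy_dir:
  fixes T :: "(complex^'n^'n) set"
  assumes states: "\<forall>\<rho>\<in>T. is_state \<rho>" and comm: "\<forall>\<rho>\<in>T. \<forall>\<rho>'\<in>T. \<rho> ** \<rho>' = \<rho>' ** \<rho>"
  shows "no_contextuality_proof T"
proof -
  have sa: "\<forall>A\<in>T. sadj A" using states by (simp add: is_state_def psd_sadj)
  obtain B where fB: "finite B" and ob: "onb_eig T B" and sB: "(\<Sum>e\<in>B. outer e e) = mat 1"
    using spectral[OF sa comm] by blast
  obtain h where h: "bij_betw h {0..<card B} B" using ex_bij_betw_nat_finite[OF fB] by blast
  define L where "L = {0..<card B}"
  define G where "G l = outer (h l) (h l)" for l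
  have hB: "h l \<in> B" if "l \<in> L" for l using h that by (auto simp: L_def bij_betw_def)
  have reidx: "(\<Sum>l\<in>L. f (h l)) = (\<Sum>e\<in>B. f e)" for f :: "complex^'n \<Rightarrow> 'b::comm_monoid_add"
    unfolding L_def by (rule sum.reindex_bij_betw[OF h])
  have sG: "(\<Sum>l\<in>L. G l) = mat 1" unfolding G_def using reidx[of "\<lambda>e. outer e e"] sB by simp
  have povm: "is_povm L G"
    unfolding is_povm_def using sG by (simp add: L_def G_def psd_outer)
  have stt: "\<forall>l\<in>L. is_state (G l)"
    using hB ob unfolding G_def onb_eig_def by (auto intro!: is_state_outer)
  have cond: "trace (\<rho> ** M) = (\<Sum>l\<in>L. trace (\<rho> ** G l) * trace (G l ** M))"
    if rT: "\<rho> \<in> T" for \<rho> M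
  proof -
    have dec: "\<rho> = (\<Sum>e\<in>B. smat (cinner_vec e (\<rho> *v e)) (outer e e))"
      by (rule decomp[OF fB ob sB rT])
    have "(\<Sum>l\<in>L. trace (\<rho> ** G l) * trace (G l ** M))
        = (\<Sum>e\<in>B. cinner_vec e (\<rho> *v e) * trace (outer e e ** M))"
      unfolding G_def trace_mult_outer by (rule reidx)
    also have "\<dots> = trace ((\<Sum>e\<in>B. smat (cinner_vec e (\<rho> *v e)) (outer e e)) ** M)"
      by (simp add: sum_mmult_left smat_mult_left trace_sum trace_smat)
    also have "\<dots> = trace (\<rho> ** M)" using dec by simp
    finally show ?thesis by simp
  qed
  show ?thesis unfolding no_contextuality_proof_def
  proof (intro exI conjI)
    show "is_povm L G" by (rule povm)
    show "\<forall>l\<in>L. is_state (G l)" by (rule stt)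
    show "\<forall>\<rho>\<in>T. \<forall>(K::nat set) M. is_povm K M \<longrightarrow>
           (\<forall>k\<in>K. trace (\<rho> ** M k) = (\<Sum>l\<in>L. trace (\<rho> ** G l) * trace (G l ** M k)))"
      using cond by simp
  qed
qed

theorem corollary2:
  fixes T :: "(complex^'n^'n) set"
  assumes "\<forall>\<rho>\<in>T. is_state \<rho>"
  shows "no_contextuality_proof T \<longleftrightarrow> (\<forall>\<rho>\<in>T. \<forall>\<rho>'\<in>T. \<rho> ** \<rho>' = \<rho>' ** \<rho>)"
  using hard_dir[OF assms] easy_dir[OF assms] by blast


end
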